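(* Obstacles are invariant under gauge transformations. Precisely, let $L\in K[D]$ with $\operatorname{Sym}_L=S_1\cdots S_k$ (homogeneous $S_i$), and let $g\in K$ be invertible. Let $I=(\operatorname{Sym}_L/S_1,\dots,\operatorname{Sym}_L/S_k)\subseteq K[X_1,\dots,X_n]$. Then the set of classes in $K[X_1,\dots,X_n]/I$ of the symbols of common obstacles to factorization of $L$ of type $(S_1)\cdots(S_k)$ equals the corresponding set for the operator $g^{-1}\circ L\circ g$, which has the same symbol and the same type.
   Context: $K$ is a field with commuting derivations $\partial_1,\dots,\partial_n$, and $K[D]=K[D_1,\dots,D_n]$ is the ring of linear differential operators over $K$: the $D_i$ commute with each other and $D_i\circ a=aD_i+\partial_i(a)$ for $a\in K$. Every $L\in K[D]$ is uniquely $\sum_{|J|\le d}a_JD^J$ with $a_J\in K$ and $D^J=D_1^{j_1}\cdots D_n^{j_n}$. The order $\operatorname{ord}(L)$ is the largest $|J|$ with $a_J\ne0$, and $\operatorname{ord}(0)=-\infty$. The symbol $\operatorname{Sym}_L=\sum_{|J|=\operatorname{ord}L}a_JX^J$, with $\operatorname{Sym}_0=0$. A factorization of type $(S_1)\cdots(S_k)$ of $M$ is $M=F_1\circ\cdots\circ F_k$ with $\operatorname{Sym}_{F_i}=S_i$. A common obstacle to factorization of $M$ of that type is an operator $R$ such that $M-R$ has such a factorization and $R$ has minimal possible order among such operators. The ring $K[X]/I$ is called the ring of obstacles. The class of the symbols of common obstacles in it is called the obstacle to factorization; these symbols lie in one class when the $S_i$ are pairwise coprime. *)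

theory Defs
  imports "HOL-Library.Poly_Mapping" "HOL-Library.Option_ord"
begin

(* Multi-indices J = (j_1,...,j_n) are finitely supported maps nat \<Rightarrow>\<^sub>0 nat
  (variable i < n corresponds to D_{i+1}, resp. X_{i+1}).
  Both linear differential operators  sum a_J D^J  and commutative polynomials
  sum a_J X^J  over K are represented as finitely supported coefficient maps
  (nat \<Rightarrow>\<^sub>0 nat) \<Rightarrow>\<^sub>0 K.  For polynomials, the library
  multiplication on this type is the ordinary (commutative) polynomial product;
  for operators we define the composition op_comp below. *)

type_synonym 'a mpoly = "(nat \<Rightarrow>\<^sub>0 nat) \<Rightarrow>\<^sub>0 'a"
type_synonym 'a diffop = "(nat \<Rightarrow>\<^sub>0 nat) \<Rightarrow>\<^sub>0 'a"

definition commuting_derivations :: "nat \<Rightarrow> (nat \<Rightarrow> 'a::field \<Rightarrow> 'a) \<Rightarrow> bool" where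
  "commuting_derivations n d \<longleftrightarrow>
     (\<forall>i<n. \<forall>a b. d i (a + b) = d i a + d i b) \<and>
     (\<forall>i<n. \<forall>a b. d i (a * b) = d i a * b + a * d i b) \<and>
     (\<forall>i<n. \<forall>j<n. \<forall>a. d i (d j a) = d j (d i a))"

definition in_vars :: "nat \<Rightarrow> 'a::zero mpoly \<Rightarrow> bool" where
  "in_vars n P \<longleftrightarrow> (\<forall>J\<in>Poly_Mapping.keys P. Poly_Mapping.keys J \<subseteq> {..<n})"

definition mdeg :: "(nat \<Rightarrow>\<^sub>0 nat) \<Rightarrow> nat" where
  "mdeg J = (\<Sum>i\<in>Poly_Mapping.keys J. Poly_Mapping.lookup J i)"

(* Order; None stands for -\<infinity> (order of 0), and None < Some m. *)
definition ord :: "'a::zero diffop \<Rightarrow> nat option" where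
  "ord L = (if L = 0 then None else Some (Max (mdeg ` Poly_Mapping.keys L)))"

definition Sym :: "'a::comm_monoid_add diffop \<Rightarrow> 'a mpoly" where
  "Sym L = (\<Sum>J\<in>{J\<in>Poly_Mapping.keys L. Some (mdeg J) = ord L}. Poly_Mapping.single J (Poly_Mapping.lookup L J))"

definition homogeneous :: "'a::zero mpoly \<Rightarrow> bool" where
  "homogeneous P \<longleftrightarrow> (\<exists>m. \<forall>J\<in>Poly_Mapping.keys P. mdeg J = m)"

definition dpow :: "(nat \<Rightarrow> 'a \<Rightarrow> 'a) \<Rightarrow> (nat \<Rightarrow>\<^sub>0 nat) \<Rightarrow> 'a \<Rightarrow> 'a" where
  "dpow d J = foldr (\<lambda>i f. (d i ^^ Poly_Mapping.lookup J i) \<circ> f) (sorted_list_of_set (Poly_Mapping.keys J)) id"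

definition mbinom :: "(nat \<Rightarrow>\<^sub>0 nat) \<Rightarrow> (nat \<Rightarrow>\<^sub>0 nat) \<Rightarrow> nat" where
  "mbinom J I = (\<Prod>i\<in>Poly_Mapping.keys J. Poly_Mapping.lookup J i choose Poly_Mapping.lookup I i)"

(* Composition in K[D]:
  (a D^J) \<circ> (b D^M) = sum over I \<le> J (componentwise) of a * binom(J,I) * \<partial>^(J-I)(b) D^(I+M). *)
definition op_comp :: "(nat \<Rightarrow> 'a::field \<Rightarrow> 'a) \<Rightarrow> 'a diffop \<Rightarrow> 'a diffop \<Rightarrow> 'a diffop" where
  "op_comp d L M =
     (\<Sum>J\<in>Poly_Mapping.keys L. \<Sum>M'\<in>Poly_Mapping.keys M. \<Sum>I\<in>{I. \<forall>i. Poly_Mapping.lookup I i \<le> Poly_Mapping.lookup J i}.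
        Poly_Mapping.single (I + M')
          (Poly_Mapping.lookup L J * of_nat (mbinom J I) * dpow d (J - I) (Poly_Mapping.lookup M M')))"

definition op_const :: "'a::zero \<Rightarrow> 'a diffop" where
  "op_const a = Poly_Mapping.single 0 a"

definition has_factorization ::
  "nat \<Rightarrow> (nat \<Rightarrow> 'a::field \<Rightarrow> 'a) \<Rightarrow> 'a mpoly list \<Rightarrow> 'a diffop \<Rightarrow> bool" where
  "has_factorization n d Ss M \<longleftrightarrow>
     (\<exists>Fs. length Fs = length Ss \<and> (\<forall>F\<in>set Fs. in_vars n F) \<and>
       (\<forall>i<length Ss. Sym (Fs ! i) = Ss ! i) \<and>
       M = foldr (op_comp d) Fs (op_const 1))"

definition common_obstacle ::
  "nat \<Rightarrow> (nat \<Rightarrow> 'a::field \<Rightarrow> 'a) \<Rightarrow> 'a mpoly list \<Rightarrow> 'a diffop \<Rightarrow> 'a diffop \<Rightarrow> bool" where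
  "common_obstacle n d Ss M R \<longleftrightarrow>
     in_vars n R \<and> has_factorization n d Ss (M - R) \<and>
     (\<forall>R'. in_vars n R' \<and> has_factorization n d Ss (M - R') \<longrightarrow> ord R \<le> ord R')"

(* The ideal I = (Sym_L/S_1, ..., Sym_L/S_k) of K[X_1..X_n], where Sym_L = S_1 \<cdots> S_k,
  so Sym_L/S_i = prod_{j \<noteq> i} S_j. *)
definition cofactor :: "'a::comm_ring_1 mpoly list \<Rightarrow> nat \<Rightarrow> 'a mpoly" where
  "cofactor Ss i = prod_list (take i Ss @ drop (Suc i) Ss)"

definition obstacle_ideal :: "nat \<Rightarrow> 'a::comm_ring_1 mpoly list \<Rightarrow> 'a mpoly set" where
  "obstacle_ideal n Ss =
     {P. \<exists>h. (\<forall>i<length Ss. in_vars n (h i)) \<and> P = (\<Sum>i<length Ss. h i * cofactor Ss i)}"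

definition obstacle_class :: "nat \<Rightarrow> 'a::comm_ring_1 mpoly list \<Rightarrow> 'a mpoly \<Rightarrow> 'a mpoly set" where
  "obstacle_class n Ss P = {Q. in_vars n Q \<and> P - Q \<in> obstacle_ideal n Ss}"

definition obstacle_classes ::
  "nat \<Rightarrow> (nat \<Rightarrow> 'a::field \<Rightarrow> 'a) \<Rightarrow> 'a mpoly list \<Rightarrow> 'a diffop \<Rightarrow> 'a mpoly set set" where
  "obstacle_classes n d Ss L = {obstacle_class n Ss (Sym R) | R. common_obstacle n d Ss L R}"

end

theory Submission
  imports Defs
begin

abbreviation ee :: "nat \<Rightarrow> (nat \<Rightarrow>\<^sub>0 nat)" where "ee i \<equiv> Poly_Mapping.single i 1"

lemma funpow_comm1:
  assumes "f \<circ> g = g \<circ> f" shows "f \<circ> g ^^ b = g ^^ b \<circ> f"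
proof (induction b)
  case 0 then show ?case by simp
next
  case (Suc b)
  have "f \<circ> g ^^ Suc b = (f \<circ> g) \<circ> g ^^ b" by (simp add: comp_assoc)
  also have "\<dots> = g \<circ> (f \<circ> g ^^ b)" using assms by (simp add: comp_assoc)
  also have "\<dots> = g ^^ Suc b \<circ> f" by (simp only: Suc.IH funpow.simps(2) comp_assoc)
  finally show ?case .
qed

lemma funpow_comm2:
  assumes "f \<circ> g = g \<circ> f" shows "f ^^ a \<circ> g ^^ b = g ^^ b \<circ> f ^^ a"
proof (induction a)
  case 0 then show ?case by simp
next
  case (Suc a)
  have "f ^^ Suc a \<circ> g ^^ b = f \<circ> (f ^^ a \<circ> g ^^ b)" by (simp add: comp_assoc)
  also have "\<dots> = (f \<circ> g ^^ b) \<circ> f ^^ a" by (simp only: Suc.IH comp_assoc)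
  also have "\<dots> = g ^^ b \<circ> f ^^ Suc a" using funpow_comm1[OF assms] by (simp add: comp_assoc)
  finally show ?case .
qed

definition gJ :: "(nat \<Rightarrow> 'b \<Rightarrow> 'b) \<Rightarrow> (nat \<Rightarrow>\<^sub>0 nat) \<Rightarrow> nat \<Rightarrow> ('b \<Rightarrow> 'b) \<Rightarrow> ('b \<Rightarrow> 'b)" where
  "gJ f J = (\<lambda>i h. (f i ^^ Poly_Mapping.lookup J i) \<circ> h)"

definition commset :: "nat set \<Rightarrow> (nat \<Rightarrow> 'b \<Rightarrow> 'b) \<Rightarrow> bool" where
  "commset A f \<longleftrightarrow> (\<forall>x\<in>A. \<forall>y\<in>A. f x \<circ> f y = f y \<circ> f x)"

lemma gJ_cfc:
  assumes "commset A f" shows "comp_fun_commute_on A (gJ f J)"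
proof
  fix x y assume xy: "x \<in> A" "y \<in> A"
  let ?a = "Poly_Mapping.lookup J x" and ?b = "Poly_Mapping.lookup J y"
  have c: "f x \<circ> f y = f y \<circ> f x" using assms xy unfolding commset_def by blast
  have eq: "f x ^^ ?a \<circ> f y ^^ ?b = f y ^^ ?b \<circ> f x ^^ ?a" by (rule funpow_comm2[OF c])
  show "gJ f J y \<circ> gJ f J x = gJ f J x \<circ> gJ f J y"
  proof (rule ext)
    fix h
    have "(gJ f J y \<circ> gJ f J x) h = (f y ^^ ?b \<circ> f x ^^ ?a) \<circ> h"
      unfolding gJ_def by (simp only: comp_apply comp_assoc)
    also have "\<dots> = (f x ^^ ?a \<circ> f y ^^ ?b) \<circ> h" by (simp only: eq)
    also have "\<dots> = (gJ f J x \<circ> gJ f J y) h"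
      unfolding gJ_def by (simp only: comp_apply comp_assoc)
    finally show "(gJ f J y \<circ> gJ f J x) h = (gJ f J x \<circ> gJ f J y) h" .
  qed
qed

lemma dpow_fold_keys:
  assumes "commset A f" "Poly_Mapping.keys J \<subseteq> A"
  shows "dpow f J = Finite_Set.fold (gJ f J) id (Poly_Mapping.keys J)"
proof -
  interpret comp_fun_commute_on A "gJ f J" by (rule gJ_cfc[OF assms(1)])
  let ?xs = "sorted_list_of_set (Poly_Mapping.keys J)"
  have set: "set (rev ?xs) = Poly_Mapping.keys J" by simp
  have "dpow f J = foldr (gJ f J) ?xs id" unfolding dpow_def gJ_def by simp
  also have "\<dots> = fold (gJ f J) (rev ?xs) id" by (simp add: foldr_conv_fold)
  also have "\<dots> = fold (gJ f J) (remdups (rev ?xs)) id"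
    by (subst distinct_remdups_id) auto
  also have "\<dots> = Finite_Set.fold (gJ f J) id (set (rev ?xs))"
    by (rule fold_set_fold_remdups[symmetric]) (use assms set in auto)
  finally show ?thesis using set by simp
qed

lemma fold_extra:
  assumes "commset A f" "finite B" "B \<subseteq> A" "Poly_Mapping.keys J \<subseteq> A"
    "B \<inter> Poly_Mapping.keys J = {}"
  shows "Finite_Set.fold (gJ f J) id (Poly_Mapping.keys J \<union> B) = Finite_Set.fold (gJ f J) id (Poly_Mapping.keys J)"
  using assms(2,3,5)
proof (induction B rule: finite_induct)
  case empty then show ?case by simp
next
  case (insert x B)
  interpret comp_fun_commute_on A "gJ f J" by (rule gJ_cfc[OF assms(1)])
  have x: "x \<notin> Poly_Mapping.keys J \<union> B" using insert by auto
  have "Finite_Set.fold (gJ f J) id (Poly_Mapping.keys J \<union> insert x B)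
     = Finite_Set.fold (gJ f J) id (insert x (Poly_Mapping.keys J \<union> B))" by simp
  also have "\<dots> = gJ f J x (Finite_Set.fold (gJ f J) id (Poly_Mapping.keys J \<union> B))"
    by (rule fold_insert) (use insert assms x in auto)
  also have "\<dots> = Finite_Set.fold (gJ f J) id (Poly_Mapping.keys J \<union> B)"
    using x by (simp add: gJ_def in_keys_iff)
  also have "\<dots> = Finite_Set.fold (gJ f J) id (Poly_Mapping.keys J)"
    by (rule insert.IH) (use insert.prems in auto)
  finally show ?case .
qed

lemma dpow_fold:
  assumes "commset A f" "finite S" "S \<subseteq> A" "Poly_Mapping.keys J \<subseteq> S"
  shows "dpow f J = Finite_Set.fold (gJ f J) id S"
proof -
  have S: "Poly_Mapping.keys J \<union> (S - Poly_Mapping.keys J) = S" using assms by blast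
  have kA: "Poly_Mapping.keys J \<subseteq> A" using assms by blast
  have "Finite_Set.fold (gJ f J) id (Poly_Mapping.keys J \<union> (S - Poly_Mapping.keys J))
     = Finite_Set.fold (gJ f J) id (Poly_Mapping.keys J)"
    by (rule fold_extra[OF assms(1)]) (use assms in blast)+
  then show ?thesis unfolding S using dpow_fold_keys[OF assms(1) kA] by simp
qed

lemma dpow_zero[simp]: "dpow f 0 = id"
  unfolding dpow_def by simp

lemma dpow_step:
  assumes "commset A f" "i \<in> A" "Poly_Mapping.keys J \<subseteq> A"
  shows "dpow f (J + ee i) = f i \<circ> dpow f J"
proof -
  let ?S = "insert i (Poly_Mapping.keys J)"
  have fin: "finite ?S" by simp
  have SA: "?S \<subseteq> A" using assms by auto
  have k1: "Poly_Mapping.keys (J + ee i) \<subseteq> ?S" using keys_add[of J "ee i"] by auto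
  interpret c1: comp_fun_commute_on A "gJ f J" by (rule gJ_cfc[OF assms(1)])
  interpret c2: comp_fun_commute_on A "gJ f (J + ee i)" by (rule gJ_cfc[OF assms(1)])
  let ?T = "Poly_Mapping.keys J - {i}"
  have eqS: "?S = insert i ?T" by auto
  have "dpow f (J + ee i) = Finite_Set.fold (gJ f (J + ee i)) id (insert i ?T)"
    using dpow_fold[OF assms(1) fin SA k1] by (simp only: eqS[symmetric])
  also have "\<dots> = gJ f (J + ee i) i (Finite_Set.fold (gJ f (J + ee i)) id ?T)"
    by (rule c2.fold_insert) (use SA in blast, simp, simp)
  also have "Finite_Set.fold (gJ f (J + ee i)) id ?T = Finite_Set.fold (gJ f J) id ?T"
  proof (rule Finite_Set.fold_cong[OF gJ_cfc[OF assms(1)] gJ_cfc[OF assms(1)]])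
    show "?T \<subseteq> A" using SA by auto
    show "finite ?T" by simp
    fix x assume "x \<in> ?T"
    then have "x \<noteq> i" by auto
    then have "Poly_Mapping.lookup (J + ee i) x = Poly_Mapping.lookup J x"
      by (simp add: lookup_add lookup_single_not_eq)
    then show "gJ f (J + ee i) x = gJ f J x" unfolding gJ_def by simp
  qed (rule refl)+
  finally have 1: "dpow f (J + ee i) = gJ f (J + ee i) i (Finite_Set.fold (gJ f J) id ?T)" .
  have "dpow f J = Finite_Set.fold (gJ f J) id (insert i ?T)"
    using dpow_fold[OF assms(1) fin SA] by (simp only: eqS[symmetric] subset_insertI)
  also have "\<dots> = gJ f J i (Finite_Set.fold (gJ f J) id ?T)"
    by (rule c1.fold_insert) (use SA in blast, simp, simp)
  finally have 2: "dpow f J = gJ f J i (Finite_Set.fold (gJ f J) id ?T)" .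
  have 3: "Poly_Mapping.lookup (J + ee i) i = Suc (Poly_Mapping.lookup J i)" by (simp add: lookup_add)
  show ?thesis unfolding 1 2 gJ_def 3 funpow.simps(2) by (simp only: comp_assoc)
qed

lemma pm_induct_in[consumes 1, case_names zero step]:
  assumes "Poly_Mapping.keys J \<subseteq> A" "P 0"
    "\<And>J i. Poly_Mapping.keys J \<subseteq> A \<Longrightarrow> i \<in> A \<Longrightarrow> P J \<Longrightarrow> P (J + ee i)"
  shows "P J"
  using assms(1)
proof (induction J rule: Poly_Mapping.update_induct)
  case const show ?case by (rule assms(2))
next
  case (update f a b)
  have up: "Poly_Mapping.update a b f = f + Poly_Mapping.single a b"
    by (rule poly_mapping_eqI) (use update.hyps in \<open>auto simp: lookup_update lookup_add lookup_single in_keys_iff when_def\<close>)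
  have kk: "Poly_Mapping.keys (Poly_Mapping.update a b f) = insert a (Poly_Mapping.keys f)"
    using update.hyps by (simp add: keys_update)
  have kf: "Poly_Mapping.keys f \<subseteq> A" and aA: "a \<in> A" using update.prems kk by auto
  have Pf: "P f" using update.IH kf by blast
  have "P (f + Poly_Mapping.single a k)" for k
  proof (induction k)
    case 0 show ?case using Pf by simp
  next
    case (Suc k)
    have e: "f + Poly_Mapping.single a (Suc k) = (f + Poly_Mapping.single a k) + ee a"
      by (simp add: single_add[symmetric] add.assoc)
    have "Poly_Mapping.keys (f + Poly_Mapping.single a k) \<subseteq> A"
      using keys_add[of f "Poly_Mapping.single a k"] kf aA by (auto split: if_split_asm)
    then show ?case unfolding e by (rule assms(3)[OF _ aA Suc])
  qed
  then show ?case using up by simp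
qed

lemma pm_induct:
  assumes "P 0" "\<And>J i. P J \<Longrightarrow> P (J + ee i)"
  shows "P J"
  by (rule pm_induct_in[of J UNIV]) (use assms in auto)

lemma dpow_add:
  assumes "commset A f" "Poly_Mapping.keys J \<subseteq> A" "Poly_Mapping.keys K \<subseteq> A"
  shows "dpow f (J + K) = dpow f J \<circ> dpow f K"
  using assms(2)
proof (induction J rule: pm_induct_in)
  case zero then show ?case by simp
next
  case (step J i)
  have kJK: "Poly_Mapping.keys (J + K) \<subseteq> A" using keys_add[of J K] step assms(3) by auto
  have "dpow f (J + ee i + K) = dpow f ((J + K) + ee i)" by (simp add: ac_simps)
  also have "\<dots> = f i \<circ> dpow f (J + K)" by (rule dpow_step[OF assms(1) step(2) kJK])
  also have "\<dots> = (f i \<circ> dpow f J) \<circ> dpow f K" using step(3) by (simp only: comp_assoc)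
  also have "\<dots> = dpow f (J + ee i) \<circ> dpow f K" using dpow_step[OF assms(1) step(2,1)] by simp
  finally show ?case .
qed

definition Le :: "(nat \<Rightarrow>\<^sub>0 nat) \<Rightarrow> (nat \<Rightarrow>\<^sub>0 nat) set" where
  "Le J = {I. \<forall>i. Poly_Mapping.lookup I i \<le> Poly_Mapping.lookup J i}"

lemma Le_zero: "Le 0 = {0}"
  unfolding Le_def by (auto intro: poly_mapping_eqI)

lemma lookup_ee: "Poly_Mapping.lookup (ee i) j = (if i = j then 1 else 0)"
  by (simp add: lookup_single)

lemma lookup_ee': "Poly_Mapping.lookup (Poly_Mapping.single i (Suc 0)) j = (if i = j then 1 else 0)"
  by (simp add: lookup_single)

lemma Le_step: "Le (J + ee i) \<subseteq> Le J \<union> (\<lambda>I. I + ee i) ` Le J"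
proof
  fix I assume I: "I \<in> Le (J + ee i)"
  have b: "Poly_Mapping.lookup I j \<le> Poly_Mapping.lookup J j + (if i = j then 1 else 0)" for j
  proof -
    have "Poly_Mapping.lookup I j \<le> Poly_Mapping.lookup (J + ee i) j" using I unfolding Le_def by blast
    then show ?thesis by (cases "i = j") (simp_all add: lookup_add lookup_single when_def)
  qed
  show "I \<in> Le J \<union> (\<lambda>I. I + ee i) ` Le J"
  proof (cases "Poly_Mapping.lookup I i \<le> Poly_Mapping.lookup J i")
    case True
    have "I \<in> Le J" unfolding Le_def
    proof (intro CollectI allI)
      fix j show "Poly_Mapping.lookup I j \<le> Poly_Mapping.lookup J j"
        using b[of j] True by (cases "i = j") auto
    qed
    then show ?thesis by simp
  next
    case False
    let ?I = "I - ee i"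
    have "?I + ee i = I"
      by (rule poly_mapping_eqI) (use False in \<open>auto simp: lookup_add lookup_minus lookup_ee lookup_ee'\<close>)
    moreover have "?I \<in> Le J" unfolding Le_def
    proof (intro CollectI allI)
      fix j show "Poly_Mapping.lookup ?I j \<le> Poly_Mapping.lookup J j"
        using b[of j] False by (cases "i = j") (auto simp: lookup_minus lookup_ee lookup_ee')
    qed
    ultimately show ?thesis by force
  qed
qed

lemma finite_Le: "finite (Le J)"
proof (induction J rule: pm_induct)
  case 1 then show ?case by (simp add: Le_zero)
next
  case (2 J i) then show ?case using finite_subset[OF Le_step] by blast
qed

lemma Le_keys: assumes "I \<in> Le J" shows "Poly_Mapping.keys I \<subseteq> Poly_Mapping.keys J"
proof
  fix x assume "x \<in> Poly_Mapping.keys I"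
  then have "Poly_Mapping.lookup I x \<noteq> 0" by (simp add: in_keys_iff)
  moreover have "Poly_Mapping.lookup I x \<le> Poly_Mapping.lookup J x" using assms unfolding Le_def by blast
  ultimately have "Poly_Mapping.lookup J x \<noteq> 0" by linarith
  then show "x \<in> Poly_Mapping.keys J" by (simp add: in_keys_iff)
qed

lemma mdeg_sum: "finite S \<Longrightarrow> Poly_Mapping.keys J \<subseteq> S \<Longrightarrow> mdeg J = sum (Poly_Mapping.lookup J) S"
  unfolding mdeg_def by (rule sum.mono_neutral_left) (auto simp: in_keys_iff)

lemma Le_mdeg: assumes "I \<in> Le J" shows "mdeg I \<le> mdeg J" "mdeg I = mdeg J \<Longrightarrow> I = J"
proof -
  have k: "Poly_Mapping.keys I \<subseteq> Poly_Mapping.keys J" by (rule Le_keys[OF assms])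
  have le: "\<And>i. Poly_Mapping.lookup I i \<le> Poly_Mapping.lookup J i" using assms unfolding Le_def by blast
  have eI: "mdeg I = sum (Poly_Mapping.lookup I) (Poly_Mapping.keys J)" by (rule mdeg_sum[OF _ k]) simp
  have eJ: "mdeg J = sum (Poly_Mapping.lookup J) (Poly_Mapping.keys J)" by (rule mdeg_sum) auto
  show "mdeg I \<le> mdeg J" unfolding eI eJ by (rule sum_mono) (rule le)
  assume eq: "mdeg I = mdeg J"
  show "I = J"
  proof (rule poly_mapping_eqI, rule ccontr)
    fix i assume ne: "Poly_Mapping.lookup I i \<noteq> Poly_Mapping.lookup J i"
    then have lt: "Poly_Mapping.lookup I i < Poly_Mapping.lookup J i" using le[of i] by simp
    then have "i \<in> Poly_Mapping.keys J" by (simp add: in_keys_iff)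
    then have "sum (Poly_Mapping.lookup I) (Poly_Mapping.keys J) < sum (Poly_Mapping.lookup J) (Poly_Mapping.keys J)"
      by (intro sum_strict_mono_ex1) (use le lt in auto)
    then show False using eq eI eJ by simp
  qed
qed

locale CD =
  fixes n :: nat and d :: "nat \<Rightarrow> 'a::field \<Rightarrow> 'a"
  assumes cd: "commuting_derivations n d"
begin

lemma d_add: "i < n \<Longrightarrow> d i (a + b) = d i a + d i b"
  using cd unfolding commuting_derivations_def by blast
lemma d_mult: "i < n \<Longrightarrow> d i (a * b) = d i a * b + a * d i b"
  using cd unfolding commuting_derivations_def by blast
lemma d_comm: "i < n \<Longrightarrow> j < n \<Longrightarrow> d i (d j a) = d j (d i a)"
  using cd unfolding commuting_derivations_def by blast
lemma d_zero: "i < n \<Longrightarrow> d i 0 = 0"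
  using d_add[of i 0 0] by (metis add.right_neutral add_left_cancel)
lemma d_one: "i < n \<Longrightarrow> d i 1 = 0"
  using d_mult[of i 1 1] by (metis add.right_neutral add_left_cancel mult_1_left mult_1_right)
lemma d_sum: "i < n \<Longrightarrow> d i (sum f S) = sum (\<lambda>x. d i (f x)) S"
  by (induction S rule: infinite_finite_induct) (auto simp: d_zero d_add)
lemma d_minus: "i < n \<Longrightarrow> d i (- a) = - d i a"
  using d_add[of i a "- a"] by (simp add: d_zero eq_neg_iff_add_eq_0 add.commute)
lemma d_diff: "i < n \<Longrightarrow> d i (a - b) = d i a - d i b"
  using d_add[of i a "- b"] by (simp add: d_minus)
lemma d_of_nat: "i < n \<Longrightarrow> d i (of_nat k) = 0"
  by (induction k) (auto simp: d_zero d_add d_one)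
lemma d_of_nat_mult: "i < n \<Longrightarrow> d i (of_nat k * a) = of_nat k * d i a"
  by (simp add: d_mult d_of_nat)

lemma commset_d: "commset {..<n} d"
  unfolding commset_def by (auto simp: fun_eq_iff d_comm)

end

definition mbF :: "nat set \<Rightarrow> (nat \<Rightarrow>\<^sub>0 nat) \<Rightarrow> (nat \<Rightarrow>\<^sub>0 nat) \<Rightarrow> nat" where
  "mbF S J U = (\<Prod>j\<in>S. Poly_Mapping.lookup J j choose Poly_Mapping.lookup U j)"

lemma mbF_pascal:
  assumes "finite S" "i \<in> S"
  shows "mbF S (J + ee i) U = mbF S J U + (if 0 < Poly_Mapping.lookup U i then mbF S J (U - ee i) else 0)"
proof -
  let ?R = "\<lambda>X V. (\<Prod>j\<in>S - {i}. Poly_Mapping.lookup X j choose Poly_Mapping.lookup V j)"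
  have split: "mbF S X V = (Poly_Mapping.lookup X i choose Poly_Mapping.lookup V i) * ?R X V" for X V
    unfolding mbF_def by (rule prod.remove[OF assms])
  have R1: "?R (J + ee i) U = ?R J U"
    by (rule prod.cong) (auto simp: lookup_add lookup_ee')
  have R2: "?R J (U - ee i) = ?R J U"
    by (rule prod.cong) (auto simp: lookup_minus lookup_ee')
  have li: "Poly_Mapping.lookup (J + ee i) i = Suc (Poly_Mapping.lookup J i)" by (simp add: lookup_add)
  show ?thesis
  proof (cases "Poly_Mapping.lookup U i")
    case 0
    then show ?thesis unfolding split[of "J + ee i"] split[of J U] R1 li by simp
  next
    case (Suc u)
    have lu: "Poly_Mapping.lookup (U - ee i) i = u" using Suc by (simp add: lookup_minus)
    show ?thesis unfolding split[of "J + ee i"] split[of J U] split[of J "U - ee i"] R1 R2 li lu Suc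
      by (simp add: algebra_simps)
  qed
qed

lemma mbF_mbinom:
  assumes "finite S" "Poly_Mapping.keys J \<subseteq> S" "I \<in> Le J"
  shows "mbF S J I = mbinom J I"
  unfolding mbF_def mbinom_def
proof (rule prod.mono_neutral_right[OF assms(1,2)], rule ballI)
  fix j assume "j \<in> S - Poly_Mapping.keys J"
  then have "Poly_Mapping.lookup J j = 0" by (simp add: in_keys_iff)
  moreover have "Poly_Mapping.lookup I j \<le> Poly_Mapping.lookup J j" using assms(3) unfolding Le_def by blast
  ultimately show "(Poly_Mapping.lookup J j choose Poly_Mapping.lookup I j) = 1" by simp
qed

lemma mbF_zero:
  assumes "finite S" "j \<in> S" "Poly_Mapping.lookup J j < Poly_Mapping.lookup U j"
  shows "mbF S J U = 0"
  unfolding mbF_def using assms by (auto intro!: prod_zero)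

lemma diff_add_Le: "U \<in> Le J \<Longrightarrow> J + K - U = (J - U) + (K :: nat \<Rightarrow>\<^sub>0 nat)"
  by (rule poly_mapping_eqI) (auto simp: lookup_add lookup_minus Le_def)

context CD begin

definition dv :: "nat \<Rightarrow> ((nat \<Rightarrow>\<^sub>0 nat) \<Rightarrow> 'a) \<Rightarrow> ((nat \<Rightarrow>\<^sub>0 nat) \<Rightarrow> 'a)" where
  "dv i v = (\<lambda>M. d i (v M) + v (M + ee i))"

abbreviation "dvp \<equiv> dpow dv"

lemma dv_apply: "dv i v M = d i (v M) + v (M + ee i)"
  unfolding dv_def by simp

lemma commset_dv: "commset {..<n} dv"
  unfolding commset_def
proof (intro ballI ext)
  fix i j v M assume "i \<in> {..<n}" "j \<in> {..<n}"
  then have ij: "i < n" "j < n" by auto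
  show "(dv i \<circ> dv j) v M = (dv j \<circ> dv i) v M"
    unfolding comp_def using ij by (simp add: dv_apply d_add d_comm ac_simps)
qed

lemma dvp_step: "i < n \<Longrightarrow> Poly_Mapping.keys J \<subseteq> {..<n} \<Longrightarrow> dvp (J + ee i) = dv i \<circ> dvp J"
  by (rule dpow_step[OF commset_dv]) auto

lemma dpow_d_step: "i < n \<Longrightarrow> Poly_Mapping.keys J \<subseteq> {..<n} \<Longrightarrow> dpow d (J + ee i) = d i \<circ> dpow d J"
  by (rule dpow_step[OF commset_d]) auto

lemma dvp_add_fun:
  assumes "Poly_Mapping.keys J \<subseteq> {..<n}"
  shows "dvp J (\<lambda>M. v M + w M) = (\<lambda>M. dvp J v M + dvp J w M)"
  using assms
proof (induction J arbitrary: v w rule: pm_induct_in)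
  case zero then show ?case by simp
next
  case (step J i)
  have "dvp (J + ee i) (\<lambda>M. v M + w M) = dv i (dvp J (\<lambda>M. v M + w M))"
    using dvp_step[OF _ step(1)] step(2) by simp
  also have "\<dots> = dv i (\<lambda>M. dvp J v M + dvp J w M)" by (simp only: step(3))
  also have "\<dots> = (\<lambda>M. dv i (dvp J v) M + dv i (dvp J w) M)"
    using step(2) by (simp add: dv_apply d_add fun_eq_iff ac_simps)
  also have "\<dots> = (\<lambda>M. dvp (J + ee i) v M + dvp (J + ee i) w M)"
    using dvp_step[OF _ step(1)] step(2) by simp
  finally show ?case .
qed

lemma dvp_zero_fun:
  assumes "Poly_Mapping.keys J \<subseteq> {..<n}"
  shows "dvp J (\<lambda>M. 0) = (\<lambda>M. 0)"
  using assms
proof (induction J rule: pm_induct_in)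
  case zero then show ?case by simp
next
  case (step J i)
  have "dvp (J + ee i) (\<lambda>M. 0) = dv i (dvp J (\<lambda>M. 0))"
    using dvp_step[OF _ step(1)] step(2) by simp
  also have "\<dots> = dv i (\<lambda>M. 0)" by (simp only: step(3))
  also have "\<dots> = (\<lambda>M. 0)" using step(2) by (intro ext) (simp add: dv_apply d_zero)
  finally show ?case .
qed

lemma dvp_sum_fun:
  assumes "Poly_Mapping.keys J \<subseteq> {..<n}"
  shows "dvp J (\<lambda>M. \<Sum>t\<in>T. f t M) = (\<lambda>M. \<Sum>t\<in>T. dvp J (f t) M)"
proof (induction T rule: infinite_finite_induct)
  case (infinite T) then show ?case using dvp_zero_fun[OF assms] by simp
next
  case empty then show ?case using dvp_zero_fun[OF assms] by simp
next
  case (insert x T)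
  have "dvp J (\<lambda>M. \<Sum>t\<in>insert x T. f t M) = dvp J (\<lambda>M. f x M + (\<Sum>t\<in>T. f t M))"
    using insert by simp
  also have "\<dots> = (\<lambda>M. dvp J (f x) M + dvp J (\<lambda>M. \<Sum>t\<in>T. f t M) M)"
    by (rule dvp_add_fun[OF assms])
  finally show ?case using insert by simp
qed

lemma leibniz:
  assumes "Poly_Mapping.keys J \<subseteq> {..<n}"
  shows "dvp J (\<lambda>M. b * w M) =
    (\<lambda>M. \<Sum>I\<in>Le J. (of_nat (mbF {..<n} J I) * dpow d (J - I) b) * dvp I w M)"
  using assms
proof (induction J rule: pm_induct_in)
  case zero
  show ?case by (simp add: Le_zero mbF_def)
next
  case (step J i)
  let ?N = "{..<n}"
  have iN: "i < n" using step by auto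
  have kJi: "Poly_Mapping.keys (J + ee i) \<subseteq> ?N" using keys_add[of J "ee i"] step by auto
  define X where "X I = dvp I w" for I
  define \<beta> where "\<beta> I = of_nat (mbF ?N J I) * dpow d (J - I) b" for I
  have kI: "Poly_Mapping.keys I \<subseteq> ?N" if "I \<in> Le (J + ee i)" for I
    using Le_keys[OF that] kJi by auto
  have kI': "Poly_Mapping.keys I \<subseteq> ?N" if "I \<in> Le J" for I
    using Le_keys[OF that] step by auto
  have kJI: "Poly_Mapping.keys (J - I) \<subseteq> ?N" for I
  proof
    fix x assume "x \<in> Poly_Mapping.keys (J - I)"
    then have "Poly_Mapping.lookup J x \<noteq> 0" by (auto simp: in_keys_iff lookup_minus)
    then have "x \<in> Poly_Mapping.keys J" by (simp add: in_keys_iff)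
    then show "x \<in> ?N" using step(1) by blast
  qed
  have dbeta: "d i (\<beta> I) = of_nat (mbF ?N J I) * dpow d (J + ee i - I) b" if "I \<in> Le J" for I
  proof -
    have "d i (\<beta> I) = of_nat (mbF ?N J I) * d i (dpow d (J - I) b)"
      unfolding \<beta>_def by (rule d_of_nat_mult[OF iN])
    also have "d i (dpow d (J - I) b) = dpow d (J - I + ee i) b"
      using dpow_d_step[OF iN kJI] by simp
    also have "J - I + ee i = J + ee i - I" using diff_add_Le[OF that] by simp
    finally show ?thesis .
  qed
  have XX: "dv i (X I) = X (I + ee i)" if "I \<in> Le J" for I
    unfolding X_def using dvp_step[OF iN kI'[OF that]] by simp
  have "dvp (J + ee i) (\<lambda>M. b * w M) = dv i (\<lambda>M. \<Sum>I\<in>Le J. \<beta> I * X I M)"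
    using dvp_step[OF iN step(1)] step(3) unfolding \<beta>_def X_def by simp
  also have "\<dots> = (\<lambda>M. (\<Sum>I\<in>Le J. d i (\<beta> I) * X I M) + (\<Sum>I\<in>Le J. \<beta> I * X (I + ee i) M))"
  proof (rule ext)
    fix M
    have "dv i (\<lambda>M. \<Sum>I\<in>Le J. \<beta> I * X I M) M
      = (\<Sum>I\<in>Le J. d i (\<beta> I) * X I M + \<beta> I * d i (X I M)) + (\<Sum>I\<in>Le J. \<beta> I * X I (M + ee i))"
      by (simp add: dv_apply d_sum[OF iN] d_mult[OF iN] sum.distrib)
    also have "\<dots> = (\<Sum>I\<in>Le J. d i (\<beta> I) * X I M) + (\<Sum>I\<in>Le J. \<beta> I * dv i (X I) M)"
      by (simp add: sum.distrib dv_apply distrib_left add.assoc)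
    also have "\<dots> = (\<Sum>I\<in>Le J. d i (\<beta> I) * X I M) + (\<Sum>I\<in>Le J. \<beta> I * X (I + ee i) M)"
      using XX by simp
    finally show "dv i (\<lambda>M. \<Sum>I\<in>Le J. \<beta> I * X I M) M = (\<Sum>I\<in>Le J. d i (\<beta> I) * X I M) + (\<Sum>I\<in>Le J. \<beta> I * X (I + ee i) M)" .
  qed
  also have "\<dots> = (\<lambda>M. \<Sum>I\<in>Le (J + ee i). (of_nat (mbF ?N (J + ee i) I) * dpow d (J + ee i - I) b) * X I M)"
  proof (rule ext)
    fix M
    let ?g = "\<lambda>U. dpow d (J + ee i - U) b * X U M"
    have A: "(\<Sum>I\<in>Le J. d i (\<beta> I) * X I M) = (\<Sum>U\<in>Le (J + ee i). of_nat (mbF ?N J U) * ?g U)"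
    proof -
      have "(\<Sum>I\<in>Le J. d i (\<beta> I) * X I M) = (\<Sum>U\<in>Le J. of_nat (mbF ?N J U) * ?g U)"
        by (rule sum.cong) (auto simp: dbeta)
      also have "\<dots> = (\<Sum>U\<in>Le (J + ee i). of_nat (mbF ?N J U) * ?g U)"
      proof (rule sum.mono_neutral_left[OF finite_Le])
        show "Le J \<subseteq> Le (J + ee i)" unfolding Le_def by (auto simp: lookup_add) (meson le_add1 order_trans)
        show "\<forall>U\<in>Le (J + ee i) - Le J. of_nat (mbF ?N J U) * ?g U = 0"
        proof
          fix U assume U: "U \<in> Le (J + ee i) - Le J"
          then obtain j where j: "Poly_Mapping.lookup J j < Poly_Mapping.lookup U j"
            unfolding Le_def by (auto simp: not_le)
          then have "j \<in> Poly_Mapping.keys U" by (simp add: in_keys_iff)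
          then have "j \<in> ?N" using kI U by auto
          then show "of_nat (mbF ?N J U) * ?g U = 0" using mbF_zero[OF _ _ j] by simp
        qed
      qed
      finally show ?thesis .
    qed
    have B: "(\<Sum>I\<in>Le J. \<beta> I * X (I + ee i) M)
       = (\<Sum>U\<in>Le (J + ee i). (if 0 < Poly_Mapping.lookup U i then of_nat (mbF ?N J (U - ee i)) else 0) * ?g U)"
    proof -
      let ?h = "\<lambda>I. I + ee i"
      have img: "?h ` Le J = {U \<in> Le (J + ee i). 0 < Poly_Mapping.lookup U i}"
      proof
        show "?h ` Le J \<subseteq> {U \<in> Le (J + ee i). 0 < Poly_Mapping.lookup U i}"
          unfolding Le_def by (auto simp: lookup_add)
        show "{U \<in> Le (J + ee i). 0 < Poly_Mapping.lookup U i} \<subseteq> ?h ` Le J"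
        proof
          fix U assume U: "U \<in> {U \<in> Le (J + ee i). 0 < Poly_Mapping.lookup U i}"
          have "U - ee i + ee i = U"
            by (rule poly_mapping_eqI) (use U in \<open>auto simp: lookup_add lookup_minus lookup_ee'\<close>)
          moreover have "U - ee i \<in> Le J"
            unfolding Le_def
          proof (intro CollectI allI)
            fix j
            have "Poly_Mapping.lookup U j \<le> Poly_Mapping.lookup (J + ee i) j" using U unfolding Le_def by blast
            then show "Poly_Mapping.lookup (U - ee i) j \<le> Poly_Mapping.lookup J j"
              by (cases "i = j") (auto simp: lookup_add lookup_minus lookup_ee')
          qed
          ultimately show "U \<in> ?h ` Le J" by force
        qed
      qed
      have inj: "inj_on ?h (Le J)" by (auto simp: inj_on_def)
      have "(\<Sum>U\<in>Le (J + ee i). (if 0 < Poly_Mapping.lookup U i then of_nat (mbF ?N J (U - ee i)) else 0) * ?g U)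
          = (\<Sum>U\<in>{U \<in> Le (J + ee i). 0 < Poly_Mapping.lookup U i}. of_nat (mbF ?N J (U - ee i)) * ?g U)"
      proof -
        have "(\<Sum>U\<in>Le (J + ee i). (if 0 < Poly_Mapping.lookup U i then of_nat (mbF ?N J (U - ee i)) else 0) * ?g U)
          = (\<Sum>U\<in>Le (J + ee i). if 0 < Poly_Mapping.lookup U i then of_nat (mbF ?N J (U - ee i)) * ?g U else 0)"
          by (rule sum.cong) auto
        also have "\<dots> = (\<Sum>U\<in>{U \<in> Le (J + ee i). 0 < Poly_Mapping.lookup U i}. of_nat (mbF ?N J (U - ee i)) * ?g U)"
          by (rule sum.inter_filter[symmetric, OF finite_Le])
        finally show ?thesis .
      qed
      also have "\<dots> = (\<Sum>U\<in>?h ` Le J. of_nat (mbF ?N J (U - ee i)) * ?g U)" by (simp only: img)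
      also have "\<dots> = (\<Sum>I\<in>Le J. of_nat (mbF ?N J (I + ee i - ee i)) * ?g (I + ee i))"
        by (simp only: sum.reindex[OF inj] comp_def)
      also have "\<dots> = (\<Sum>I\<in>Le J. \<beta> I * X (I + ee i) M)"
        unfolding \<beta>_def by (simp only: add_diff_cancel_right' add_diff_cancel_right mult.assoc)
      finally show ?thesis by simp
    qed
    have "(\<Sum>I\<in>Le J. d i (\<beta> I) * X I M) + (\<Sum>I\<in>Le J. \<beta> I * X (I + ee i) M)
      = (\<Sum>U\<in>Le (J + ee i). (of_nat (mbF ?N J U) + (if 0 < Poly_Mapping.lookup U i then of_nat (mbF ?N J (U - ee i)) else 0)) * ?g U)"
      unfolding A B by (simp add: sum.distrib distrib_right)
    also have "\<dots> = (\<Sum>U\<in>Le (J + ee i). (of_nat (mbF ?N (J + ee i) U) * dpow d (J + ee i - U) b) * X U M)"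
    proof (rule sum.cong[OF refl])
      fix U
      have p: "mbF ?N (J + ee i) U = mbF ?N J U + (if 0 < Poly_Mapping.lookup U i then mbF ?N J (U - ee i) else 0)"
        by (rule mbF_pascal) (use iN in auto)
      show "(of_nat (mbF ?N J U) + (if 0 < Poly_Mapping.lookup U i then of_nat (mbF ?N J (U - ee i)) else 0)) * ?g U
         = (of_nat (mbF ?N (J + ee i) U) * dpow d (J + ee i - U) b) * X U M"
        unfolding p by (cases "0 < Poly_Mapping.lookup U i") (simp_all add: algebra_simps)
    qed
    finally show "(\<Sum>I\<in>Le J. d i (\<beta> I) * X I M) + (\<Sum>I\<in>Le J. \<beta> I * X (I + ee i) M)
      = (\<Sum>I\<in>Le (J + ee i). (of_nat (mbF ?N (J + ee i) I) * dpow d (J + ee i - I) b) * X I M)" .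
  qed
  finally show ?case unfolding X_def .
qed

end

lemma keys_sum_sub: "(\<And>x. x \<in> T \<Longrightarrow> Poly_Mapping.keys (f x) \<subseteq> X) \<Longrightarrow> Poly_Mapping.keys (sum f T) \<subseteq> X"
  using keys_sum[of f T] by blast

lemma op_comp_set: "{I. \<forall>i. Poly_Mapping.lookup I i \<le> Poly_Mapping.lookup J i} = Le J"
  unfolding Le_def by simp

lemma in_vars_keys: "in_vars n L \<Longrightarrow> J \<in> Poly_Mapping.keys L \<Longrightarrow> Poly_Mapping.keys J \<subseteq> {..<n}"
  unfolding in_vars_def by auto

lemma in_vars_op_comp:
  assumes "in_vars n A" "in_vars n B"
  shows "in_vars n (op_comp d A B)"
proof -
  have "Poly_Mapping.keys (op_comp d A B) \<subseteq> {K. Poly_Mapping.keys K \<subseteq> {..<n}}"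
    unfolding op_comp_def op_comp_set
  proof (intro keys_sum_sub)
    fix J M' I assume J: "J \<in> Poly_Mapping.keys A" and M': "M' \<in> Poly_Mapping.keys B" and I: "I \<in> Le J"
    have "Poly_Mapping.keys (I + M') \<subseteq> {..<n}"
      using keys_add[of I M'] Le_keys[OF I] in_vars_keys[OF assms(1) J] in_vars_keys[OF assms(2) M'] by blast
    then show "Poly_Mapping.keys (Poly_Mapping.single (I + M') (Poly_Mapping.lookup A J * of_nat (mbinom J I) * dpow d (J - I) (Poly_Mapping.lookup B M'))) \<subseteq> {K. Poly_Mapping.keys K \<subseteq> {..<n}}"
      by auto
  qed
  then show ?thesis unfolding in_vars_def by auto
qed

lemma in_vars_op_const: "in_vars n (op_const a)"
  unfolding in_vars_def op_const_def by auto

lemma in_vars_diff: "in_vars n A \<Longrightarrow> in_vars n B \<Longrightarrow> in_vars n (A - B)"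
  unfolding in_vars_def using keys_diff[of A B] by blast

context CD begin

definition Phi :: "'a diffop \<Rightarrow> ((nat \<Rightarrow>\<^sub>0 nat) \<Rightarrow> 'a) \<Rightarrow> ((nat \<Rightarrow>\<^sub>0 nat) \<Rightarrow> 'a)" where
  "Phi L v = (\<lambda>M. \<Sum>J\<in>Poly_Mapping.keys L. Poly_Mapping.lookup L J * dvp J v M)"

lemma Phi_super:
  assumes "finite S" "Poly_Mapping.keys L \<subseteq> S"
  shows "Phi L v M = (\<Sum>J\<in>S. Poly_Mapping.lookup L J * dvp J v M)"
  unfolding Phi_def by (rule sum.mono_neutral_left[OF assms]) (auto simp: in_keys_iff)

lemma Phi_add: "Phi (A + B) v M = Phi A v M + Phi B v M"
proof -
  let ?S = "Poly_Mapping.keys A \<union> Poly_Mapping.keys B"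
  have "Phi (A + B) v M = (\<Sum>J\<in>?S. Poly_Mapping.lookup (A + B) J * dvp J v M)"
    by (rule Phi_super) (auto dest: subsetD[OF keys_add])
  also have "\<dots> = (\<Sum>J\<in>?S. Poly_Mapping.lookup A J * dvp J v M) + (\<Sum>J\<in>?S. Poly_Mapping.lookup B J * dvp J v M)"
    by (simp add: lookup_add distrib_right sum.distrib)
  also have "\<dots> = Phi A v M + Phi B v M"
    by (simp add: Phi_super[symmetric])
  finally show ?thesis .
qed

lemma Phi_diff: "Phi (A - B) v M = Phi A v M - Phi B v M"
proof -
  let ?S = "Poly_Mapping.keys A \<union> Poly_Mapping.keys B"
  have "Phi (A - B) v M = (\<Sum>J\<in>?S. Poly_Mapping.lookup (A - B) J * dvp J v M)"
    by (rule Phi_super) (use keys_diff[of A B] in auto)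
  also have "\<dots> = (\<Sum>J\<in>?S. Poly_Mapping.lookup A J * dvp J v M) - (\<Sum>J\<in>?S. Poly_Mapping.lookup B J * dvp J v M)"
    by (simp add: lookup_minus left_diff_distrib sum_subtractf)
  also have "\<dots> = Phi A v M - Phi B v M"
    by (simp add: Phi_super[symmetric])
  finally show ?thesis .
qed

lemma Phi_zero: "Phi 0 v M = 0"
  unfolding Phi_def by simp

lemma Phi_single: "Phi (Poly_Mapping.single K c) v M = c * dvp K v M"
  unfolding Phi_def by (cases "c = 0") auto

lemma Phi_sum: "Phi (sum f T) v M = (\<Sum>t\<in>T. Phi (f t) v M)"
  by (induction T rule: infinite_finite_induct) (auto simp: Phi_zero Phi_add)

lemma Phi_const: "Phi (op_const a) v = (\<lambda>M. a * v M)"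
  unfolding op_const_def by (rule ext) (simp add: Phi_single)

lemma Phi_hom:
  assumes A: "in_vars n A" and B: "in_vars n B"
  shows "Phi (op_comp d A B) v = Phi A (Phi B v)"
proof (rule ext)
  fix M
  let ?N = "{..<n}"
  have "Phi (op_comp d A B) v M =
    (\<Sum>J\<in>Poly_Mapping.keys A. \<Sum>M'\<in>Poly_Mapping.keys B. \<Sum>I\<in>Le J.
       (Poly_Mapping.lookup A J * of_nat (mbinom J I) * dpow d (J - I) (Poly_Mapping.lookup B M')) * dvp (I + M') v M)"
    unfolding op_comp_def op_comp_set by (simp add: Phi_sum Phi_single)
  also have "\<dots> = (\<Sum>J\<in>Poly_Mapping.keys A. Poly_Mapping.lookup A J * (\<Sum>M'\<in>Poly_Mapping.keys B. \<Sum>I\<in>Le J.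
       (of_nat (mbF ?N J I) * dpow d (J - I) (Poly_Mapping.lookup B M')) * dvp I (dvp M' v) M))"
  proof (rule sum.cong[OF refl])
    fix J assume J: "J \<in> Poly_Mapping.keys A"
    have kJ: "Poly_Mapping.keys J \<subseteq> ?N" by (rule in_vars_keys[OF A J])
    show "(\<Sum>M'\<in>Poly_Mapping.keys B. \<Sum>I\<in>Le J.
       (Poly_Mapping.lookup A J * of_nat (mbinom J I) * dpow d (J - I) (Poly_Mapping.lookup B M')) * dvp (I + M') v M)
      = Poly_Mapping.lookup A J * (\<Sum>M'\<in>Poly_Mapping.keys B. \<Sum>I\<in>Le J.
       (of_nat (mbF ?N J I) * dpow d (J - I) (Poly_Mapping.lookup B M')) * dvp I (dvp M' v) M)"
      unfolding sum_distrib_left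
    proof (intro sum.cong[OF refl])
      fix M' I assume M': "M' \<in> Poly_Mapping.keys B" and I: "I \<in> Le J"
      have kM: "Poly_Mapping.keys M' \<subseteq> ?N" by (rule in_vars_keys[OF B M'])
      have kI: "Poly_Mapping.keys I \<subseteq> ?N" using Le_keys[OF I] kJ by blast
      have "dvp (I + M') v = dvp I (dvp M' v)"
        using dpow_add[OF commset_dv kI kM] by simp
      moreover have "mbF ?N J I = mbinom J I" by (rule mbF_mbinom[OF _ kJ I]) simp
      ultimately show "(Poly_Mapping.lookup A J * of_nat (mbinom J I) * dpow d (J - I) (Poly_Mapping.lookup B M')) * dvp (I + M') v M
        = Poly_Mapping.lookup A J * ((of_nat (mbF ?N J I) * dpow d (J - I) (Poly_Mapping.lookup B M')) * dvp I (dvp M' v) M)"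
        by (simp add: mult.assoc)
    qed
  qed
  also have "\<dots> = (\<Sum>J\<in>Poly_Mapping.keys A. Poly_Mapping.lookup A J * dvp J (Phi B v) M)"
  proof (rule sum.cong[OF refl])
    fix J assume J: "J \<in> Poly_Mapping.keys A"
    have kJ: "Poly_Mapping.keys J \<subseteq> ?N" by (rule in_vars_keys[OF A J])
    have "dvp J (Phi B v) M = dvp J (\<lambda>N. \<Sum>M'\<in>Poly_Mapping.keys B. Poly_Mapping.lookup B M' * dvp M' v N) M"
      unfolding Phi_def by simp
    also have "\<dots> = (\<Sum>M'\<in>Poly_Mapping.keys B. dvp J (\<lambda>N. Poly_Mapping.lookup B M' * dvp M' v N) M)"
      using dvp_sum_fun[OF kJ, of "\<lambda>M' N. Poly_Mapping.lookup B M' * dvp M' v N" "Poly_Mapping.keys B"]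
      by (simp add: fun_eq_iff)
    also have "\<dots> = (\<Sum>M'\<in>Poly_Mapping.keys B. \<Sum>I\<in>Le J.
       (of_nat (mbF ?N J I) * dpow d (J - I) (Poly_Mapping.lookup B M')) * dvp I (dvp M' v) M)"
      by (simp add: leibniz[OF kJ])
    finally show "Poly_Mapping.lookup A J * (\<Sum>M'\<in>Poly_Mapping.keys B. \<Sum>I\<in>Le J.
       (of_nat (mbF ?N J I) * dpow d (J - I) (Poly_Mapping.lookup B M')) * dvp I (dvp M' v) M)
      = Poly_Mapping.lookup A J * dvp J (Phi B v) M" by simp
  qed
  also have "\<dots> = Phi A (Phi B v) M" unfolding Phi_def by simp
  finally show "Phi (op_comp d A B) v M = Phi A (Phi B v) M" .
qed

definition delta :: "(nat \<Rightarrow>\<^sub>0 nat) \<Rightarrow> (nat \<Rightarrow>\<^sub>0 nat) \<Rightarrow> (nat \<Rightarrow>\<^sub>0 nat) \<Rightarrow> 'a" where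
  "delta K P = (\<lambda>M. if M + K = P then 1 else 0)"

lemma dvp_delta:
  assumes "Poly_Mapping.keys J \<subseteq> {..<n}"
  shows "dvp J (delta 0 P) = delta J P"
  using assms
proof (induction J rule: pm_induct_in)
  case zero then show ?case by simp
next
  case (step J i)
  have "dvp (J + ee i) (delta 0 P) = dv i (dvp J (delta 0 P))"
    using dvp_step[OF _ step(1)] step(2) by simp
  also have "\<dots> = dv i (delta J P)" by (simp only: step(3))
  also have "\<dots> = delta (J + ee i) P"
  proof (rule ext)
    fix M
    have "d i (delta J P M) = 0" unfolding delta_def using step(2) by (simp add: d_zero d_one)
    then show "dv i (delta J P) M = delta (J + ee i) P M"
      unfolding dv_apply by (simp add: delta_def ac_simps)
  qed
  finally show ?case .
qed

lemma Phi_delta: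
  assumes "in_vars n L"
  shows "Phi L (delta 0 P) 0 = Poly_Mapping.lookup L P"
proof -
  have "Phi L (delta 0 P) 0 = (\<Sum>J\<in>Poly_Mapping.keys L. Poly_Mapping.lookup L J * (if J = P then 1 else 0))"
    unfolding Phi_def
  proof (rule sum.cong[OF refl])
    fix J assume J: "J \<in> Poly_Mapping.keys L"
    show "Poly_Mapping.lookup L J * dvp J (delta 0 P) 0 = Poly_Mapping.lookup L J * (if J = P then 1 else 0)"
      unfolding dvp_delta[OF in_vars_keys[OF assms J]] by (simp add: delta_def)
  qed
  also have "\<dots> = Poly_Mapping.lookup L P"
  proof -
    have "(\<Sum>J\<in>Poly_Mapping.keys L. Poly_Mapping.lookup L J * (if J = P then 1 else 0))
       = (\<Sum>J\<in>Poly_Mapping.keys L. if J = P then Poly_Mapping.lookup L J else 0)"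
      by (rule sum.cong) auto
    also have "\<dots> = Poly_Mapping.lookup L P" by (simp add: sum.delta in_keys_iff)
    finally show ?thesis .
  qed
  finally show ?thesis .
qed

lemma Phi_inj:
  assumes "in_vars n A" "in_vars n B" "\<And>v. Phi A v = Phi B v"
  shows "A = B"
  by (rule poly_mapping_eqI) (metis Phi_delta assms)

end

lemma mbinom_refl: "mbinom P P = 1"
  unfolding mbinom_def by simp

lemma Le_refl: "P \<in> Le P"
  unfolding Le_def by simp

lemma op_comp_zero_left: "op_comp d 0 B = 0"
  unfolding op_comp_def by simp

lemma op_comp_zero_right: "op_comp d A 0 = 0"
  unfolding op_comp_def by simp

lemma lookup_comp_const_left:
  "Poly_Mapping.lookup (op_comp d (op_const a) M) P = a * Poly_Mapping.lookup M P"
proof (cases "a = 0")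
  case True
  then show ?thesis unfolding op_const_def by (simp add: op_comp_zero_left)
next
  case False
  have "op_comp d (op_const a) M = (\<Sum>M'\<in>Poly_Mapping.keys M. Poly_Mapping.single M' (a * Poly_Mapping.lookup M M'))"
    unfolding op_comp_def op_comp_set op_const_def using False by (simp add: Le_zero mbinom_def)
  then show ?thesis
    by (simp add: lookup_sum lookup_single when_def sum.delta' in_keys_iff)
qed

lemma lookup_comp_const_right:
  assumes "g \<noteq> 0"
  shows "Poly_Mapping.lookup (op_comp d R (op_const g)) P =
    (\<Sum>J\<in>Poly_Mapping.keys R. if P \<in> Le J then Poly_Mapping.lookup R J * of_nat (mbinom J P) * dpow d (J - P) g else 0)"
proof -
  have "op_comp d R (op_const g) = (\<Sum>J\<in>Poly_Mapping.keys R. \<Sum>I\<in>Le J.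
     Poly_Mapping.single I (Poly_Mapping.lookup R J * of_nat (mbinom J I) * dpow d (J - I) g))"
    unfolding op_comp_def op_comp_set op_const_def using assms by simp
  then have "Poly_Mapping.lookup (op_comp d R (op_const g)) P = (\<Sum>J\<in>Poly_Mapping.keys R. \<Sum>I\<in>Le J.
     if I = P then Poly_Mapping.lookup R J * of_nat (mbinom J I) * dpow d (J - I) g else 0)"
    by (simp add: lookup_sum lookup_single when_def)
  also have "\<dots> = (\<Sum>J\<in>Poly_Mapping.keys R. if P \<in> Le J then Poly_Mapping.lookup R J * of_nat (mbinom J P) * dpow d (J - P) g else 0)"
    by (rule sum.cong[OF refl]) (simp add: sum.delta[OF finite_Le])
  finally show ?thesis .
qed

context CD begin

definition Cj :: "'a \<Rightarrow> 'a diffop \<Rightarrow> 'a diffop" where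
  "Cj g L = op_comp d (op_const (inverse g)) (op_comp d L (op_const g))"

lemma Cj_vars: "in_vars n L \<Longrightarrow> in_vars n (Cj g L)"
  unfolding Cj_def by (intro in_vars_op_comp in_vars_op_const)

lemma Phi_Cj: "in_vars n L \<Longrightarrow> Phi (Cj g L) v = (\<lambda>M. inverse g * Phi L (\<lambda>N. g * v N) M)"
  unfolding Cj_def
  by (simp add: Phi_hom in_vars_op_comp in_vars_op_const Phi_const)

lemma Cj_comp:
  assumes "g \<noteq> 0" "in_vars n F" "in_vars n G"
  shows "Cj g (op_comp d F G) = op_comp d (Cj g F) (Cj g G)"
proof (rule Phi_inj)
  show "in_vars n (Cj g (op_comp d F G))" by (intro Cj_vars in_vars_op_comp assms)
  show "in_vars n (op_comp d (Cj g F) (Cj g G))" by (intro Cj_vars in_vars_op_comp assms)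
  fix v
  have e: "(\<lambda>N. g * (inverse g * w N)) = w" for w :: "(nat \<Rightarrow>\<^sub>0 nat) \<Rightarrow> 'a"
    using assms(1) by (simp add: mult.assoc[symmetric])
  show "Phi (Cj g (op_comp d F G)) v = Phi (op_comp d (Cj g F) (Cj g G)) v"
    by (simp add: Phi_Cj Phi_hom Cj_vars in_vars_op_comp assms e)
qed

lemma Cj_one:
  assumes "g \<noteq> 0"
  shows "Cj g (op_const 1) = op_const 1"
proof (rule Phi_inj)
  show "in_vars n (Cj g (op_const 1))" by (intro Cj_vars in_vars_op_const)
  show "in_vars n (op_const 1)" by (rule in_vars_op_const)
  fix v show "Phi (Cj g (op_const 1)) v = Phi (op_const 1) v"
    using assms by (simp add: Phi_Cj in_vars_op_const Phi_const mult.assoc[symmetric])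
qed

lemma Cj_diff:
  assumes "in_vars n A" "in_vars n B"
  shows "Cj g (A - B) = Cj g A - Cj g B"
proof (rule Phi_inj)
  show "in_vars n (Cj g (A - B))" by (intro Cj_vars in_vars_diff assms)
  show "in_vars n (Cj g A - Cj g B)" by (intro Cj_vars in_vars_diff assms)
  fix v show "Phi (Cj g (A - B)) v = Phi (Cj g A - Cj g B) v"
    by (rule ext) (simp add: Phi_diff Phi_Cj in_vars_diff assms right_diff_distrib)
qed

lemma Cj_inv:
  assumes "g \<noteq> 0" "in_vars n L"
  shows "Cj (inverse g) (Cj g L) = L"
proof (rule Phi_inj)
  show "in_vars n (Cj (inverse g) (Cj g L))" by (intro Cj_vars assms)
  show "in_vars n L" by (rule assms)
  fix v
  have e: "(\<lambda>N. g * (inverse g * w N)) = w" for w :: "(nat \<Rightarrow>\<^sub>0 nat) \<Rightarrow> 'a"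
    using assms(1) by (simp add: mult.assoc[symmetric])
  show "Phi (Cj (inverse g) (Cj g L)) v = Phi L v"
    using assms by (simp add: Phi_Cj Cj_vars e mult.assoc[symmetric])
qed

lemma in_vars_foldr:
  "\<forall>F\<in>set Fs. in_vars n F \<Longrightarrow> in_vars n (foldr (op_comp d) Fs (op_const 1))"
  by (induction Fs) (auto intro: in_vars_op_comp in_vars_op_const)

lemma Cj_foldr:
  assumes "g \<noteq> 0" "\<forall>F\<in>set Fs. in_vars n F"
  shows "Cj g (foldr (op_comp d) Fs (op_const 1)) = foldr (op_comp d) (map (Cj g) Fs) (op_const 1)"
  using assms(2)
proof (induction Fs)
  case Nil then show ?case using Cj_one[OF assms(1)] by simp
next
  case (Cons F Fs)
  then show ?case using Cj_comp[OF assms(1)] in_vars_foldr by simp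
qed

lemma lookup_Cj:
  assumes "g \<noteq> 0"
  shows "Poly_Mapping.lookup (Cj g R) P = inverse g *
    (\<Sum>J\<in>Poly_Mapping.keys R. if P \<in> Le J then Poly_Mapping.lookup R J * of_nat (mbinom J P) * dpow d (J - P) g else 0)"
  unfolding Cj_def lookup_comp_const_left lookup_comp_const_right[OF assms] ..

lemma lookup_Cj_top:
  assumes "g \<noteq> 0" "\<forall>J\<in>Poly_Mapping.keys R. mdeg J \<le> m" "m \<le> mdeg P"
  shows "Poly_Mapping.lookup (Cj g R) P = Poly_Mapping.lookup R P"
proof -
  have "(\<Sum>J\<in>Poly_Mapping.keys R. if P \<in> Le J then Poly_Mapping.lookup R J * of_nat (mbinom J P) * dpow d (J - P) g else 0)
      = (\<Sum>J\<in>Poly_Mapping.keys R. if J = P then Poly_Mapping.lookup R J * g else 0)"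
  proof (rule sum.cong[OF refl])
    fix J assume J: "J \<in> Poly_Mapping.keys R"
    show "(if P \<in> Le J then Poly_Mapping.lookup R J * of_nat (mbinom J P) * dpow d (J - P) g else 0)
      = (if J = P then Poly_Mapping.lookup R J * g else 0)"
    proof (cases "P \<in> Le J")
      case True
      have "mdeg P \<le> mdeg J" by (rule Le_mdeg(1)[OF True])
      moreover have "mdeg J \<le> mdeg P" using assms(2,3) J by force
      ultimately have "J = P" using Le_mdeg(2)[OF True] by simp
      then show ?thesis using True by (simp add: mbinom_refl)
    next
      case False
      then have "J \<noteq> P" using Le_refl by blast
      then show ?thesis using False by simp
    qed
  qed
  also have "\<dots> = (if P \<in> Poly_Mapping.keys R then Poly_Mapping.lookup R P * g else 0)"
    by (simp add: sum.delta')
  finally show ?thesis unfolding lookup_Cj[OF assms(1)] using assms(1)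
    by (simp add: in_keys_iff)
qed

lemma keys_Cj:
  assumes "g \<noteq> 0" "P \<in> Poly_Mapping.keys (Cj g R)"
  shows "\<exists>J\<in>Poly_Mapping.keys R. mdeg P \<le> mdeg J"
proof (rule ccontr)
  assume "\<not> ?thesis"
  then have "\<And>J. J \<in> Poly_Mapping.keys R \<Longrightarrow> P \<notin> Le J" using Le_mdeg(1) by force
  then have "Poly_Mapping.lookup (Cj g R) P = 0" unfolding lookup_Cj[OF assms(1)] by simp
  then show False using assms(2) by (simp add: in_keys_iff)
qed

lemma Cj_zero: "Cj g 0 = 0"
  unfolding Cj_def by (simp add: op_comp_zero_left op_comp_zero_right)

lemma Cj_ord_Sym:
  assumes "g \<noteq> 0"
  shows "ord (Cj g R) = ord R \<and> Sym (Cj g R) = Sym R"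
proof (cases "R = 0")
  case True then show ?thesis by (simp add: Cj_zero)
next
  case False
  define m where "m = Max (mdeg ` Poly_Mapping.keys R)"
  have fin: "finite (mdeg ` Poly_Mapping.keys R)" by simp
  have ne: "Poly_Mapping.keys R \<noteq> {}" using False by simp
  have le: "\<forall>J\<in>Poly_Mapping.keys R. mdeg J \<le> m" unfolding m_def using fin by auto
  have "m \<in> mdeg ` Poly_Mapping.keys R" unfolding m_def by (rule Max_in[OF fin]) (use ne in simp)
  then obtain J0 where J0: "J0 \<in> Poly_Mapping.keys R" "mdeg J0 = m" by auto
  have top: "\<And>P. m \<le> mdeg P \<Longrightarrow> Poly_Mapping.lookup (Cj g R) P = Poly_Mapping.lookup R P"
    by (rule lookup_Cj_top[OF assms le])
  have J0C: "J0 \<in> Poly_Mapping.keys (Cj g R)" using top[of J0] J0 by (simp add: in_keys_iff)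
  have leC: "\<forall>J\<in>Poly_Mapping.keys (Cj g R). mdeg J \<le> m"
    using keys_Cj[OF assms] le by fastforce
  have C0: "Cj g R \<noteq> 0" using J0C by auto
  have mC: "Max (mdeg ` Poly_Mapping.keys (Cj g R)) = m"
    by (rule Max_eqI) (use leC J0C J0 in auto)
  have oR: "ord R = Some m" unfolding ord_def m_def using False by simp
  have oC: "ord (Cj g R) = Some m" unfolding ord_def using C0 mC by simp
  have sets: "{J \<in> Poly_Mapping.keys (Cj g R). Some (mdeg J) = ord (Cj g R)} = {J \<in> Poly_Mapping.keys R. Some (mdeg J) = ord R}"
    unfolding oR oC using top by (auto simp: in_keys_iff)
  have "Sym (Cj g R) = Sym R"
    unfolding Sym_def sets
    by (rule sum.cong[OF refl]) (use top oR in auto)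
  then show ?thesis using oR oC by simp
qed

lemma hasfact_Cj:
  assumes "g \<noteq> 0" "has_factorization n d Ss M"
  shows "has_factorization n d Ss (Cj g M)"
proof -
  obtain Fs where Fs: "length Fs = length Ss" "\<forall>F\<in>set Fs. in_vars n F"
    "\<forall>i<length Ss. Sym (Fs ! i) = Ss ! i" "M = foldr (op_comp d) Fs (op_const 1)"
    using assms(2) unfolding has_factorization_def by blast
  show ?thesis unfolding has_factorization_def
  proof (intro exI conjI)
    show "length (map (Cj g) Fs) = length Ss" using Fs by simp
    show "\<forall>F\<in>set (map (Cj g) Fs). in_vars n F" using Fs Cj_vars by auto
    show "\<forall>i<length Ss. Sym (map (Cj g) Fs ! i) = Ss ! i" using Fs Cj_ord_Sym[OF assms(1)] by simp
    show "Cj g M = foldr (op_comp d) (map (Cj g) Fs) (op_const 1)" using Fs Cj_foldr[OF assms(1)] by simp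
  qed
qed

lemma obst_Cj:
  assumes g: "g \<noteq> 0" and L: "in_vars n L" and R: "common_obstacle n d Ss L R"
  shows "common_obstacle n d Ss (Cj g L) (Cj g R)"
proof -
  have Rv: "in_vars n R" and Rf: "has_factorization n d Ss (L - R)"
    and Rm: "\<And>R'. in_vars n R' \<Longrightarrow> has_factorization n d Ss (L - R') \<Longrightarrow> ord R \<le> ord R'"
    using R unfolding common_obstacle_def by auto
  have ig: "inverse g \<noteq> 0" using g by simp
  show ?thesis unfolding common_obstacle_def
  proof (intro conjI allI impI)
    show "in_vars n (Cj g R)" by (rule Cj_vars[OF Rv])
    show "has_factorization n d Ss (Cj g L - Cj g R)"
      using hasfact_Cj[OF g Rf] Cj_diff[OF L Rv] by simp
    fix R' assume a: "in_vars n R' \<and> has_factorization n d Ss (Cj g L - R')"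
    have "Cj (inverse g) (Cj g L - R') = L - Cj (inverse g) R'"
      using Cj_diff[OF Cj_vars[OF L], of R' "inverse g"] a Cj_inv[OF g L] by simp
    then have "has_factorization n d Ss (L - Cj (inverse g) R')"
      using hasfact_Cj[OF ig, of Ss "Cj g L - R'"] a by simp
    then have "ord R \<le> ord (Cj (inverse g) R')" using Rm Cj_vars a by blast
    then show "ord (Cj g R) \<le> ord R'" using Cj_ord_Sym[OF g, of R] Cj_ord_Sym[OF ig, of R'] by simp
  qed
qed

end

theorem mainTheorem9:
  fixes n :: nat and d :: "nat \<Rightarrow> 'a::field \<Rightarrow> 'a"
    and L :: "'a diffop" and Ss :: "'a mpoly list" and g :: 'a
  assumes "commuting_derivations n d"
    and "in_vars n L"
    and "\<forall>S\<in>set Ss. in_vars n S \<and> homogeneous S"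
    and "Sym L = prod_list Ss"
    and "g \<noteq> 0"
  shows "Sym (op_comp d (op_const (inverse g)) (op_comp d L (op_const g))) = Sym L
    \<and> obstacle_classes n d Ss (op_comp d (op_const (inverse g)) (op_comp d L (op_const g)))
        = obstacle_classes n d Ss L"
proof -
  interpret CD n d by (rule CD.intro) (rule assms(1))
  have e: "op_comp d (op_const (inverse g)) (op_comp d L (op_const g)) = Cj g L"
    unfolding Cj_def ..
  have g: "g \<noteq> 0" and ig: "inverse g \<noteq> 0" using assms(5) by auto
  have L: "in_vars n L" by (rule assms(2))
  have L': "in_vars n (Cj g L)" by (rule Cj_vars[OF L])
  have "obstacle_classes n d Ss (Cj g L) = obstacle_classes n d Ss L"
  proof
    show "obstacle_classes n d Ss (Cj g L) \<subseteq> obstacle_classes n d Ss L"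
    proof
      fix X assume "X \<in> obstacle_classes n d Ss (Cj g L)"
      then obtain R where X: "X = obstacle_class n Ss (Sym R)" and R: "common_obstacle n d Ss (Cj g L) R"
        unfolding obstacle_classes_def by blast
      have "common_obstacle n d Ss (Cj (inverse g) (Cj g L)) (Cj (inverse g) R)"
        by (rule obst_Cj[OF ig L' R])
      then have co: "common_obstacle n d Ss L (Cj (inverse g) R)" using Cj_inv[OF g L] by simp
      have "Sym (Cj (inverse g) R) = Sym R" using Cj_ord_Sym[OF ig] by blast
      then have "X = obstacle_class n Ss (Sym (Cj (inverse g) R))" using X by simp
      then show "X \<in> obstacle_classes n d Ss L" unfolding obstacle_classes_def using co by blast
    qed
    show "obstacle_classes n d Ss L \<subseteq> obstacle_classes n d Ss (Cj g L)"
    proof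
      fix X assume "X \<in> obstacle_classes n d Ss L"
      then obtain R where X: "X = obstacle_class n Ss (Sym R)" and R: "common_obstacle n d Ss L R"
        unfolding obstacle_classes_def by blast
      have co: "common_obstacle n d Ss (Cj g L) (Cj g R)" by (rule obst_Cj[OF g L R])
      have "Sym (Cj g R) = Sym R" using Cj_ord_Sym[OF g] by blast
      then have "X = obstacle_class n Ss (Sym (Cj g R))" using X by simp
      then show "X \<in> obstacle_classes n d Ss (Cj g L)" unfolding obstacle_classes_def using co by blast
    qed
  qed
  then show ?thesis unfolding e using Cj_ord_Sym[OF g, of L] by simp
qed

end
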